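(* Fix $D\ge 1$, $\lambda>0$, and vectors $\mathbf{v}_1,\dots,\mathbf{v}_D\in\mathbb{R}^D$ such that, with $\mathbf{v}_{D+1}:=\mathbf{0}$, $\|\mathbf{v}_d-\mathbf{v}_{d'}\|_2=\lambda$ for all $d\neq d'$ in $\{1,\dots,D+1\}$. For a current state $\boldsymbol{\theta}\in\mathbb{R}^D$, let the multiproposal $q(\boldsymbol{\theta},\cdot)$ be the distribution of the configuration $$(\boldsymbol{\theta}^*_1,\dots,\boldsymbol{\theta}^*_{D+1}) := \mathbf{Q}(\mathbf{v}_1,\dots,\mathbf{v}_D,\mathbf{0})+\boldsymbol{\theta},\qquad \mathbf{Q}\sim\mathcal{H}(\mathcal{O}_D),$$ where $\mathcal{H}(\mathcal{O}_D)$ is the uniform (Haar) probability distribution on the orthogonal group $\mathcal{O}_D$ and adding $\boldsymbol{\theta}$ means adding it to each column (so $\boldsymbol{\theta}^*_{D+1}=\boldsymbol{\theta}$). Then for any configuration $\boldsymbol{\Theta}^*=(\boldsymbol{\theta}^*_1,\dots,\boldsymbol{\theta}^*_{D+1})$ so generated, the multiproposal satisfies the symmetry relation $$q(\boldsymbol{\theta}^*_1,\boldsymbol{\Theta}^* )=\dots=q(\boldsymbol{\theta}^*_d,\boldsymbol{\Theta}^* )=\dots=q(\boldsymbol{\theta}^*_{D+1},\boldsymbol{\Theta}^* ),$$ i.e. the configuration (as a set of $D+1$ points) is equally likely to be generated starting from any one of its points as the current state.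
   Context: $q(\boldsymbol{\theta},\boldsymbol{\Theta}^* )$ denotes the probability (density) that the proposal mechanism, started at current state $\boldsymbol{\theta}$, produces the set of proposals $\boldsymbol{\Theta}^*$, which always contains $\boldsymbol{\theta}$ itself. *)

theory Defs
  imports "HOL-Analysis.Analysis" "HOL-Probability.Probability"
begin

text \<open>Haar (uniform) probability distribution on the orthogonal group O_D, D = CARD('n):
  a Borel probability measure on D x D real matrices, concentrated on the orthogonal
  matrices and invariant under left and right multiplication by orthogonal matrices
  (these properties characterise the Haar measure uniquely).\<close>
definition haar_orthogonal :: "(real^'n^'n) measure \<Rightarrow> bool" where
  "haar_orthogonal H \<longleftrightarrow>
     prob_space H \<and> sets H = sets borel \<and>
     (AE Q in H. orthogonal_matrix Q) \<and>
     (\<forall>P. orthogonal_matrix P \<longrightarrow> distr H borel (\<lambda>Q. P ** Q) = H) \<and>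
     (\<forall>P. orthogonal_matrix P \<longrightarrow> distr H borel (\<lambda>Q. Q ** P) = H)"

text \<open>The D+1 simplex vertices indexed by 'n option: Some i is v_i, None is v_{D+1} = 0.\<close>
definition ext_vertices :: "('n \<Rightarrow> real^'n) \<Rightarrow> 'n option \<Rightarrow> real^'n" where
  "ext_vertices v o' = (case o' of None \<Rightarrow> 0 | Some i \<Rightarrow> v i)"

definition config :: "('n \<Rightarrow> real^'n) \<Rightarrow> real^'n^'n \<Rightarrow> real^'n \<Rightarrow> real^'n^('n option)" where
  "config v Q \<theta> = (\<chi> o'. Q *v ext_vertices v o' + \<theta>)"

definition multiproposal ::
  "(real^'n^'n) measure \<Rightarrow> ('n \<Rightarrow> real^'n) \<Rightarrow> real^'n \<Rightarrow> (real^'n^('n option)) measure" where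
  "multiproposal H v \<theta> = distr H borel (\<lambda>Q. config v Q \<theta>)"

text \<open>A function of a configuration that depends only on the unordered set of points.\<close>
definition perm_invariant :: "(real^'n^('n option) \<Rightarrow> 'b) \<Rightarrow> bool" where
  "perm_invariant g \<longleftrightarrow> (\<forall>\<sigma> X. \<sigma> permutes UNIV \<longrightarrow> g (\<chi> o'. X $ (\<sigma> o')) = g X)"

end

theory Submission
  imports Defs
begin

definition refl_map :: "real^'n \<Rightarrow> real^'n \<Rightarrow> real^'n" where
  "refl_map w u = u - (2 * (u \<bullet> w) / (w \<bullet> w)) *\<^sub>R w"

lemma refl_map_linear: "linear (refl_map w)"
  unfolding refl_map_def linear_iff
  by (auto simp: inner_add_left algebra_simps add_divide_distrib scaleR_add_left)

lemma refl_map_orth: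
  assumes "w \<noteq> 0"
  shows "orthogonal_transformation (refl_map w)"
proof -
  have ww: "w \<bullet> w \<noteq> 0" using assms by simp
  have "refl_map w a \<bullet> refl_map w b = a \<bullet> b" for a b
    unfolding refl_map_def using ww
    by (simp add: inner_diff_left inner_diff_right inner_commute field_simps)
  thus ?thesis using refl_map_linear orthogonal_transformation_def by blast
qed

lemma refl_matrix:
  assumes "w \<noteq> 0"
  shows "orthogonal_matrix (matrix (refl_map w))" "matrix (refl_map w) *v u = refl_map w u"
  using refl_map_orth[OF assms] orthogonal_transformation_matrix apply blast
  using refl_map_linear matrix_vector_mul(2) by metis

lemma config_continuous:
  "continuous_on UNIV (\<lambda>p::(real^'n) \<times> (real^'n^'n). config v (snd p) (fst p))"
  unfolding config_def matrix_vector_mult_def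
  by (intro continuous_intros)


lemma config_meas:
  "(\<lambda>p::(real^'n) \<times> (real^'n^'n). config v (snd p) (fst p)) \<in> borel_measurable (lborel \<Otimes>\<^sub>M H)"
  if "sets H = sets borel"
proof -
  have "(\<lambda>p::(real^'n) \<times> (real^'n^'n). config v (snd p) (fst p)) \<in> borel_measurable (borel \<Otimes>\<^sub>M borel)"
    unfolding borel_prod by (rule borel_measurable_continuous_onI[OF config_continuous])
  moreover have "sets (lborel \<Otimes>\<^sub>M H) = sets (borel \<Otimes>\<^sub>M (borel :: (real^'n^'n) measure))"
    using that by (intro sets_pair_measure_cong) auto
  ultimately show ?thesis using measurable_cong_sets by blast
qed

lemma pair_into_borel:
  fixes g :: "'a \<Rightarrow> 'c::euclidean_space" and h :: "'a \<Rightarrow> 'b::euclidean_space"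
  assumes "g \<in> M \<rightarrow>\<^sub>M borel" "h \<in> M \<rightarrow>\<^sub>M borel"
  shows "(\<lambda>x. (g x, h x)) \<in> M \<rightarrow>\<^sub>M borel"
proof -
  have "(\<lambda>x. (g x, h x)) \<in> M \<rightarrow>\<^sub>M borel \<Otimes>\<^sub>M borel"
    using assms by (rule measurable_Pair)
  thus ?thesis by (simp add: borel_prod)
qed

lemma vec_nth_cont: "continuous_on UNIV (\<lambda>X::real^'n^'m. X $ k)"
  by (intro continuous_intros)

lemma matmul_cont: "continuous_on UNIV (\<lambda>Q::real^'n^'n. Q ** S)"
  unfolding matrix_matrix_mult_def by (intro continuous_intros)

theorem lemma1:
  fixes v :: "'n::finite \<Rightarrow> real^'n" and lam :: real and H :: "(real^'n^'n) measure"
  assumes "lam > 0"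
    and "\<And>a b. a \<noteq> b \<Longrightarrow> dist (ext_vertices v a) (ext_vertices v b) = lam"
    and "haar_orthogonal H"
    and "(\<lambda>(\<theta>, X). f \<theta> X) \<in> borel_measurable (borel \<Otimes>\<^sub>M borel)"
    and "\<And>\<theta>. perm_invariant (f \<theta>)"
  shows "(\<integral>\<^sup>+ \<theta>. (\<integral>\<^sup>+ X. f \<theta> X \<partial>multiproposal H v \<theta>) \<partial>lborel)
       = (\<integral>\<^sup>+ \<theta>. (\<integral>\<^sup>+ X. f (X $ k) X \<partial>multiproposal H v \<theta>) \<partial>lborel)"
proof -
  have sH: "sets H = sets borel" using assms(3) unfolding haar_orthogonal_def by blast
  interpret H: prob_space H using assms(3) unfolding haar_orthogonal_def by blast
  interpret P: pair_sigma_finite lborel H by unfold_locales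
  have fm: "(\<lambda>p. f (fst p) (snd p)) \<in> borel_measurable borel"
    using assms(4) by (simp add: case_prod_beta' borel_prod)
  have cm: "(\<lambda>p::(real^'n) \<times> (real^'n^'n). config v (snd p) (fst p)) \<in> borel_measurable (lborel \<Otimes>\<^sub>M H)"
    using config_meas sH by blast
  have cmQ: "(\<lambda>Q. config v Q \<theta>) \<in> borel_measurable H" for \<theta>
    using measurable_compose[OF measurable_Pair[OF measurable_const[of \<theta>] measurable_ident_sets[OF refl]] cm]
    by simp
  have mfst: "fst \<in> lborel \<Otimes>\<^sub>M H \<rightarrow>\<^sub>M borel"
    using measurable_fst[of lborel H] measurable_cong_sets[OF refl sets_lborel] by blast
  have Gm: "(\<lambda>p. f (fst p) (config v (snd p) (fst p))) \<in> borel_measurable (lborel \<Otimes>\<^sub>M H)"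
    using measurable_compose[OF pair_into_borel[OF mfst cm] fm] by simp
  have Km: "(\<lambda>p. f (config v (snd p) (fst p) $ k) (config v (snd p) (fst p))) \<in> borel_measurable (lborel \<Otimes>\<^sub>M H)"
    using measurable_compose[OF pair_into_borel[OF measurable_compose[OF cm borel_measurable_continuous_onI[OF vec_nth_cont]] cm] fm]
    by simp
  have fthm: "f \<theta> \<in> borel_measurable borel" for \<theta>
    using measurable_compose[OF pair_into_borel[OF measurable_const measurable_ident_sets[OF refl]] fm] by simp
  have fkm: "(\<lambda>X. f (X $ k) X) \<in> borel_measurable borel"
    using measurable_compose[OF pair_into_borel[OF borel_measurable_continuous_onI[OF vec_nth_cont] measurable_ident_sets[OF refl]] fm] by simp
  have L1: "(\<integral>\<^sup>+ X. f \<theta> X \<partial>multiproposal H v \<theta>) = (\<integral>\<^sup>+ Q. f \<theta> (config v Q \<theta>) \<partial>H)" for \<theta>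
    unfolding multiproposal_def by (rule nn_integral_distr[OF cmQ]) (simp add: fthm)
  have R1: "(\<integral>\<^sup>+ X. f (X $ k) X \<partial>multiproposal H v \<theta>) = (\<integral>\<^sup>+ Q. f (config v Q \<theta> $ k) (config v Q \<theta>) \<partial>H)" for \<theta>
    unfolding multiproposal_def by (rule nn_integral_distr[OF cmQ]) (simp add: fkm)
  have main: "(\<integral>\<^sup>+ \<theta>. (\<integral>\<^sup>+ Q. f \<theta> (config v Q \<theta>) \<partial>H) \<partial>lborel)
     = (\<integral>\<^sup>+ \<theta>. (\<integral>\<^sup>+ Q. f (config v Q \<theta> $ k) (config v Q \<theta>) \<partial>H) \<partial>lborel)"
  proof (cases k)
    case None
    show ?thesis by (simp add: None config_def ext_vertices_def)
  next
    case (Some i)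
    define w where "w = v i"
    define S where "S = matrix (refl_map w)"
    define \<tau> where "\<tau> = Transposition.transpose (Some i) (None :: 'n option)"
    have wne: "w \<noteq> 0"
      using assms(2)[of "Some i" None] assms(1) by (auto simp: ext_vertices_def w_def)
    have ww: "w \<bullet> w = lam\<^sup>2"
      using assms(2)[of "Some i" None] by (simp add: ext_vertices_def w_def dist_norm power2_norm_eq_inner[symmetric])
    have vw: "2 * (v j \<bullet> w) = w \<bullet> w" if "j \<noteq> i" for j
    proof -
      have a: "norm (v j - w) = lam" using assms(2)[of "Some j" "Some i"] that
        by (simp add: ext_vertices_def w_def dist_norm)
      have b: "norm (v j) = lam" using assms(2)[of "Some j" None]
        by (simp add: ext_vertices_def dist_norm)
      have "(v j - w) \<bullet> (v j - w) = v j \<bullet> v j - 2 * (v j \<bullet> w) + w \<bullet> w"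
        by (simp add: inner_diff_left inner_diff_right inner_commute)
      thus ?thesis using a b ww by (simp add: power2_norm_eq_inner[symmetric])
    qed
    have Sorth: "orthogonal_matrix S" and Sv: "S *v u = refl_map w u" for u
      using refl_matrix[OF wne] S_def by auto
    have key: "S *v ext_vertices v (\<tau> o') = ext_vertices v o' - w" for o'
    proof (cases o')
      case None
      then show ?thesis using wne
        by (simp add: Sv \<tau>_def ext_vertices_def refl_map_def w_def) (simp add: vec_eq_iff)
    next
      case (Some j)
      show ?thesis
      proof (cases "j = i")
        case True
        then show ?thesis using Some by (simp add: Sv \<tau>_def ext_vertices_def refl_map_def w_def)
      next
        case False
        then show ?thesis using Some vw[OF False] wne
          by (simp add: Sv \<tau>_def ext_vertices_def refl_map_def w_def)
      qed
    qed
    have perm: "f \<theta> (config v Q (\<theta> - Q *v w)) = f \<theta> (config v (Q ** S) \<theta>)" for \<theta> Q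
    proof -
      have "(\<chi> o'. config v (Q ** S) \<theta> $ (\<tau> o')) = config v Q (\<theta> - Q *v w)"
        by (simp add: config_def key matrix_vector_mul_assoc[symmetric] matrix_vector_mult_diff_distrib vec_eq_iff algebra_simps)
      moreover have "\<tau> permutes UNIV" unfolding \<tau>_def by (rule permutes_swap_id) auto
      ultimately show ?thesis using assms(5)[of \<theta>] unfolding perm_invariant_def by metis
    qed
    have plusm: "((+) c) \<in> lborel \<rightarrow>\<^sub>M borel" for c :: "real^'n"
      unfolding measurable_cong_sets[OF sets_lborel refl]
      by (rule borel_measurable_continuous_onI) (intro continuous_intros)
    have confc: "continuous_on UNIV (\<lambda>\<theta>. config v P \<theta>)" for P
      unfolding config_def by (intro continuous_intros)
    have Fm: "(\<lambda>\<theta>. f \<theta> (config v P \<theta>)) \<in> borel_measurable borel" for P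
      using measurable_compose[OF pair_into_borel[OF measurable_ident_sets[OF refl]
            borel_measurable_continuous_onI[OF confc]] fm] by simp
    have inner: "(\<integral>\<^sup>+ \<theta>. f (config v Q \<theta> $ k) (config v Q \<theta>) \<partial>lborel)
        = (\<integral>\<^sup>+ \<theta>. f \<theta> (config v (Q ** S) \<theta>) \<partial>lborel)" for Q
    proof -
      define c where "c = Q *v w"
      have "(\<integral>\<^sup>+ \<theta>. f \<theta> (config v (Q ** S) \<theta>) \<partial>lborel)
          = (\<integral>\<^sup>+ \<theta>. f \<theta> (config v (Q ** S) \<theta>) \<partial>distr lborel borel ((+) c))"
        by (simp add: lborel_distr_plus)
      also have "\<dots> = (\<integral>\<^sup>+ \<theta>. f (c + \<theta>) (config v (Q ** S) (c + \<theta>)) \<partial>lborel)"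
        by (rule nn_integral_distr[OF plusm]) (simp add: Fm)
      also have "\<dots> = (\<integral>\<^sup>+ \<theta>. f (config v Q \<theta> $ k) (config v Q \<theta>) \<partial>lborel)"
      proof (rule nn_integral_cong)
        fix \<theta>
        have "f (c + \<theta>) (config v (Q ** S) (c + \<theta>)) = f (c + \<theta>) (config v Q (c + \<theta> - Q *v w))"
          using perm[of "c + \<theta>" Q] by simp
        also have "\<dots> = f (config v Q \<theta> $ k) (config v Q \<theta>)"
          by (simp add: c_def Some config_def ext_vertices_def w_def add.commute)
        finally show "f (c + \<theta>) (config v (Q ** S) (c + \<theta>)) = f (config v Q \<theta> $ k) (config v Q \<theta>)" .
      qed
      finally show ?thesis by simp
    qed
    define \<Phi> where "\<Phi> Q = (\<integral>\<^sup>+ \<theta>. f \<theta> (config v Q \<theta>) \<partial>lborel)" for Q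
    have Gm': "(\<lambda>(Q, \<theta>). f \<theta> (config v Q \<theta>)) \<in> borel_measurable (H \<Otimes>\<^sub>M lborel)"
      using Gm measurable_pair_swap_iff[of "\<lambda>p. f (fst p) (config v (snd p) (fst p))" lborel H borel]
      by (simp add: case_prod_beta')
    have \<Phi>m: "\<Phi> \<in> borel_measurable H"
      unfolding \<Phi>_def using lborel.borel_measurable_nn_integral[OF Gm'] by simp
    have \<Phi>m': "\<Phi> \<in> borel_measurable borel"
      using \<Phi>m measurable_cong_sets[OF sH refl] by blast
    have Sm: "(\<lambda>Q. Q ** S) \<in> H \<rightarrow>\<^sub>M borel"
      using borel_measurable_continuous_onI[OF matmul_cont[of S]] measurable_cong_sets[OF sH refl] by blast
    have Km': "case_prod (\<lambda>\<theta> Q. f (config v Q \<theta> $ k) (config v Q \<theta>)) \<in> borel_measurable (lborel \<Otimes>\<^sub>M H)"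
      using Km by (simp add: case_prod_beta')
    have Gm'': "case_prod (\<lambda>\<theta> Q. f \<theta> (config v Q \<theta>)) \<in> borel_measurable (lborel \<Otimes>\<^sub>M H)"
      using Gm by (simp add: case_prod_beta')
    have "(\<integral>\<^sup>+ \<theta>. (\<integral>\<^sup>+ Q. f (config v Q \<theta> $ k) (config v Q \<theta>) \<partial>H) \<partial>lborel)
        = (\<integral>\<^sup>+ Q. (\<integral>\<^sup>+ \<theta>. f (config v Q \<theta> $ k) (config v Q \<theta>) \<partial>lborel) \<partial>H)"
      by (rule P.Fubini'[OF Km', symmetric])
    also have "\<dots> = (\<integral>\<^sup>+ Q. \<Phi> (Q ** S) \<partial>H)"
      by (simp add: inner \<Phi>_def)
    also have "\<dots> = (\<integral>\<^sup>+ Q. \<Phi> Q \<partial>distr H borel (\<lambda>Q. Q ** S))"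
      by (rule nn_integral_distr[OF Sm, symmetric]) (simp add: \<Phi>m')
    also have "\<dots> = (\<integral>\<^sup>+ Q. \<Phi> Q \<partial>H)"
      using assms(3) Sorth unfolding haar_orthogonal_def by simp
    also have "\<dots> = (\<integral>\<^sup>+ \<theta>. (\<integral>\<^sup>+ Q. f \<theta> (config v Q \<theta>) \<partial>H) \<partial>lborel)"
      unfolding \<Phi>_def by (rule P.Fubini'[OF Gm''])
    finally show ?thesis by simp
  qed
  show ?thesis unfolding L1 R1 by (rule main)
qed

end
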